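(* Let $f\colon\mathbb{Z}_{\ge1}\times\mathbb{Z}_{\ge1}\to\mathbb{Z}$ be any function such that for all $k,h\ge1$ every finite digraph $G$ with $\delta^+(G)\geq f(k,h)$ contains $S^-_{k,h}$ as a subgraph. Let $k\geq 1$ and $\ell\geq 2$. Then every finite digraph $G$ with $\delta^+(G)\geq f(k,3k\ell^{k+1})+2k\ell^k$ contains $T(k,\ell)$ as a subgraph.
   Context: Digraphs are finite, have no loops and no multiple copies of the same edge, but may contain two edges in opposite directions between a pair of vertices. $\delta^+(G)$ is the minimum out-degree. $S^-_{k,h}$ is the $(k-1)$-subdivision of the in-star with $h$ leaves: a centre vertex together with $h$ directed paths of length $k$ ending at the centre, pairwise sharing only the centre. (A function $f$ as in the hypothesis exists by a result of Aboulker, Cohen, Havet, Lochet, Moura and Thomassé.) $B^+_{k,\ell}$ is the complete $\ell$-ary tree of depth $k$ with all edges oriented away from the root. $T(k,\ell)$ is the oriented tree obtained from $B^+_{k,\ell}$ by identifying each leaf with the centre of a new (disjoint) copy of $S^-_{k,\ell}$. Containing a digraph as a subgraph means having a subgraph isomorphic to it. *)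

theory Defs
  imports Main
begin

definition is_digraph :: "'a set \<Rightarrow> ('a \<times> 'a) set \<Rightarrow> bool" where
  "is_digraph V E \<longleftrightarrow> finite V \<and> V \<noteq> {} \<and> E \<subseteq> V \<times> V \<and> (\<forall>v. (v, v) \<notin> E)"

definition out_degree :: "('a \<times> 'a) set \<Rightarrow> 'a \<Rightarrow> nat" where
  "out_degree E v = card {w. (v, w) \<in> E}"

definition min_out_degree :: "'a set \<Rightarrow> ('a \<times> 'a) set \<Rightarrow> nat" where
  "min_out_degree V E = Min (out_degree E ` V)"

definition contains_subgraph ::
  "'a set \<Rightarrow> ('a \<times> 'a) set \<Rightarrow> 'b set \<Rightarrow> ('b \<times> 'b) set \<Rightarrow> bool" where
  "contains_subgraph V E VH EH \<longleftrightarrow>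
     (\<exists>\<phi>. inj_on \<phi> VH \<and> \<phi> ` VH \<subseteq> V \<and> (\<forall>(a, b) \<in> EH. (\<phi> a, \<phi> b) \<in> E))"

text \<open>The in-star S^-_{k,h}: centre Inl (), and for each i < h a directed path
Inr (i,0) -> Inr (i,1) -> ... -> Inr (i,k-1) -> centre of length k.\<close>

definition in_star_V :: "nat \<Rightarrow> nat \<Rightarrow> (unit + nat \<times> nat) set" where
  "in_star_V k h = {Inl ()} \<union> {Inr (i, j) | i j. i < h \<and> j < k}"

definition in_star_E :: "nat \<Rightarrow> nat \<Rightarrow> ((unit + nat \<times> nat) \<times> (unit + nat \<times> nat)) set" where
  "in_star_E k h =
     {(Inr (i, j), Inr (i, Suc j)) | i j. i < h \<and> Suc j < k}
   \<union> {(Inr (i, k - 1), Inl ()) | i. i < h}"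

text \<open>T(k,l): the complete l-ary out-tree B^+_{k,l} of depth k (vertices: words over
{0..<l} of length \<le> k, edges xs -> xs @ [i]), where each leaf xs (length k) is the
centre of its own copy of S^-_{k,l}, with path vertices Inr (xs, i, j).\<close>

definition T_V :: "nat \<Rightarrow> nat \<Rightarrow> (nat list + nat list \<times> nat \<times> nat) set" where
  "T_V k l = {Inl xs | xs. length xs \<le> k \<and> set xs \<subseteq> {0..<l}}
     \<union> {Inr (xs, i, j) | xs i j. length xs = k \<and> set xs \<subseteq> {0..<l} \<and> i < l \<and> j < k}"

definition T_E :: "nat \<Rightarrow> nat \<Rightarrow>
    ((nat list + nat list \<times> nat \<times> nat) \<times> (nat list + nat list \<times> nat \<times> nat)) set" where
  "T_E k l =
     {(Inl xs, Inl (xs @ [i])) | xs i. length xs < k \<and> set xs \<subseteq> {0..<l} \<and> i < l}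
   \<union> {(Inr (xs, i, j), Inr (xs, i, Suc j)) | xs i j.
         length xs = k \<and> set xs \<subseteq> {0..<l} \<and> i < l \<and> Suc j < k}
   \<union> {(Inr (xs, i, k - 1), Inl xs) | xs i. length xs = k \<and> set xs \<subseteq> {0..<l} \<and> i < l}"

end

theory Submission
  imports Defs
begin


lemma greedy:
  fixes L :: "'i set" and Opt :: "'i \<Rightarrow> 'o set" and S :: "'i \<Rightarrow> 'o \<Rightarrow> 'v set"
  assumes "finite L" "finite F"
    and "\<forall>x\<in>L. finite (Opt x) \<and> card F + card L * s < card (Opt x)"
    and "\<forall>x\<in>L. \<forall>c\<in>Opt x. finite (S x c) \<and> card (S x c) \<le> s"
    and "\<forall>x\<in>L. \<forall>p1\<in>Opt x. \<forall>p2\<in>Opt x. p1 \<noteq> p2 \<longrightarrow> S x p1 \<inter> S x p2 = {}"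
  shows "\<exists>g. \<forall>x\<in>L. g x \<in> Opt x \<and> S x (g x) \<inter> F = {} \<and>
              (\<forall>y\<in>L. y \<noteq> x \<longrightarrow> S x (g x) \<inter> S y (g y) = {})"
  using assms
proof (induction L rule: finite_induct)
  case empty
  then show ?case by auto
next
  case (insert x L)
  have cL: "card (insert x L) = Suc (card L)" using insert by simp
  have "\<forall>y\<in>L. finite (Opt y) \<and> card F + card L * s < card (Opt y)"
  proof
    fix y assume y: "y \<in> L"
    have "card F + card L * s \<le> card F + card (insert x L) * s" using cL by simp
    moreover have "finite (Opt y) \<and> card F + card (insert x L) * s < card (Opt y)" using insert(5) y by blast
    ultimately show "finite (Opt y) \<and> card F + card L * s < card (Opt y)" by linarith
  qed
  moreover have "\<forall>y\<in>L. \<forall>c\<in>Opt y. finite (S y c) \<and> card (S y c) \<le> s" using insert(6) by blast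
  moreover have "\<forall>y\<in>L. \<forall>p1\<in>Opt y. \<forall>p2\<in>Opt y. p1 \<noteq> p2 \<longrightarrow> S y p1 \<inter> S y p2 = {}" using insert(7) by blast
  ultimately obtain g where g: "\<forall>y\<in>L. g y \<in> Opt y \<and> S y (g y) \<inter> F = {} \<and>
              (\<forall>z\<in>L. z \<noteq> y \<longrightarrow> S y (g y) \<inter> S z (g z) = {})" using insert.IH insert.prems(1) by blast
  define F' where "F' = F \<union> (\<Union>y\<in>L. S y (g y))"
  have finF': "finite F'" unfolding F'_def using insert(1,4,6) g by blast
  have "card (\<Union>y\<in>L. S y (g y)) \<le> (\<Sum>y\<in>L. card (S y (g y)))" by (rule card_UN_le) (rule insert)
  also have "\<dots> \<le> (\<Sum>y\<in>L. s)" apply (rule sum_mono) using insert(6) g by auto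
  finally have "card (\<Union>y\<in>L. S y (g y)) \<le> card L * s" by simp
  hence cF': "card F' \<le> card F + card L * s" unfolding F'_def
    by (meson add_le_mono card_Un_le le_trans order_refl)
  define K where "K = (\<Union>w\<in>F'. {c\<in>Opt x. w \<in> S x c})"
  have "card K \<le> (\<Sum>w\<in>F'. card {c\<in>Opt x. w \<in> S x c})" unfolding K_def
    by (rule card_UN_le) (rule finF')
  also have "\<dots> \<le> (\<Sum>w\<in>F'. 1)"
  proof (rule sum_mono)
    fix w assume "w \<in> F'"
    have fin: "finite {c\<in>Opt x. w \<in> S x c}" using insert(5) by simp
    have "\<forall>a\<in>{c\<in>Opt x. w \<in> S x c}. \<forall>b\<in>{c\<in>Opt x. w \<in> S x c}. a = b"
    proof (intro ballI)
      fix a b assume a: "a \<in> {c\<in>Opt x. w \<in> S x c}" and b: "b \<in> {c\<in>Opt x. w \<in> S x c}"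
      have d: "\<forall>p1\<in>Opt x. \<forall>p2\<in>Opt x. p1 \<noteq> p2 \<longrightarrow> S x p1 \<inter> S x p2 = {}" using insert(7) by simp
      show "a = b"
      proof (rule ccontr)
        assume "a \<noteq> b"
        then have "S x a \<inter> S x b = {}" using d a b by simp
        then show False using a b by auto
      qed
    qed
    then show "card {c\<in>Opt x. w \<in> S x c} \<le> 1" using fin by (simp add: card_le_Suc0_iff_eq)
  qed
  finally have cK: "card K \<le> card F'" by simp
  have "card L * s \<le> card (insert x L) * s" using cL by simp
  moreover have "card F + card (insert x L) * s < card (Opt x)" using insert(5) by blast
  ultimately have "card F' < card (Opt x)" using cF' by linarith
  then have "card K < card (Opt x)" using cK by linarith
  moreover have "K \<subseteq> Opt x" unfolding K_def by blast
  ultimately have "\<not> Opt x \<subseteq> K" by (metis less_irrefl subset_antisym)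
  then obtain c where c: "c \<in> Opt x" "c \<notin> K" by blast
  have oF': "S x c \<inter> F' = {}"
  proof (rule ccontr)
    assume "S x c \<inter> F' \<noteq> {}"
    then obtain w where "w \<in> F'" "w \<in> S x c" by blast
    then have "c \<in> K" unfolding K_def using c(1) by blast
    then show False using c(2) by blast
  qed
  show ?case
  proof (rule exI[of _ "g(x := c)"], rule ballI, intro conjI)
    fix y assume y: "y \<in> insert x L"
    show "(g(x := c)) y \<in> Opt y" using y c g by auto
    show "S y ((g(x := c)) y) \<inter> F = {}" using y oF' g unfolding F'_def by auto
    show "\<forall>z\<in>insert x L. z \<noteq> y \<longrightarrow> S y ((g(x := c)) y) \<inter> S z ((g(x := c)) z) = {}"
    proof (intro ballI impI)
      fix z assume z: "z \<in> insert x L" "z \<noteq> y"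
      show "S y ((g(x := c)) y) \<inter> S z ((g(x := c)) z) = {}"
      proof (cases "y = x")
        case True then show ?thesis using z oF' insert(2) unfolding F'_def by auto
      next
        case False
        show ?thesis
        proof (cases "z = x")
          case True then show ?thesis using y False oF' insert(2) unfolding F'_def by auto
        next
          case False2: False
          have "y \<in> L" "z \<in> L" using y z False False2 by auto
          then show ?thesis using g z(2) False False2 by auto
        qed
      qed
    qed
  qed
qed

definition nb :: "('a \<times> 'a) set \<Rightarrow> 'a \<Rightarrow> 'a set" where
  "nb E v = {w. (v, w) \<in> E}"

fun lev :: "nat \<Rightarrow> 'a set \<Rightarrow> ('a \<times> 'a) set \<Rightarrow> 'a set \<Rightarrow> nat \<Rightarrow> 'a set" where
  "lev m V E C 0 = C"
| "lev m V E C (Suc j) = {v\<in>V. m \<le> card (nb E v \<inter> lev m V E C j)}"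

lemma lev_sub: "C \<subseteq> V \<Longrightarrow> lev m V E C j \<subseteq> V"
  by (cases j) auto

lemma lev_nonempty:
  fixes V :: "'a set"
  assumes fin: "finite V" and ne: "V \<noteq> {}" and EV: "E \<subseteq> V \<times> V" and CV: "C \<subseteq> V"
    and k: "k \<ge> 1" and f0: "f0 \<ge> 1"
    and deg: "\<forall>v\<in>V. f0 + k * m \<le> card (nb E v)"
    and noS: "\<forall>S. S \<subseteq> V \<longrightarrow> S \<noteq> {} \<longrightarrow> (\<forall>v\<in>S. f0 \<le> card (nb E v \<inter> S)) \<longrightarrow> S \<inter> C \<noteq> {}"
  shows "lev m V E C k \<noteq> {}"
proof
  assume emp: "lev m V E C k = {}"
  define A where "A = lev m V E C"
  have nbV: "nb E v \<subseteq> V" for v using EV unfolding nb_def by auto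
  have finnb: "finite (nb E v)" for v using nbV fin finite_subset by blast
  have notA: "card (nb E v \<inter> A i) \<le> m - 1" if "v \<in> V" "v \<notin> A (Suc i)" for v i
  proof -
    have "\<not> m \<le> card (nb E v \<inter> A i)" using that unfolding A_def by simp
    then show ?thesis by linarith
  qed
  have main: "V \<subseteq> (\<Union>i\<in>{t..<k}. A i)" if "t \<le> k" for t
    using that
  proof (induction t)
    case 0
    define S where "S = V - (\<Union>i\<in>{0..<k}. A i)"
    have "S = {}"
    proof (rule ccontr)
      assume Sne: "S \<noteq> {}"
      have "\<forall>v\<in>S. f0 \<le> card (nb E v \<inter> S)"
      proof
        fix v assume vS: "v \<in> S"
        then have vV: "v \<in> V" unfolding S_def by blast
        have nbsub: "nb E v \<subseteq> (nb E v \<inter> S) \<union> (\<Union>i\<in>{0..<k}. nb E v \<inter> A i)"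
          using nbV unfolding S_def by blast
        have "card (nb E v) \<le> card ((nb E v \<inter> S) \<union> (\<Union>i\<in>{0..<k}. nb E v \<inter> A i))"
          using finnb nbsub by (intro card_mono) auto
        also have "\<dots> \<le> card (nb E v \<inter> S) + card (\<Union>i\<in>{0..<k}. nb E v \<inter> A i)"
          by (rule card_Un_le)
        also have "card (\<Union>i\<in>{0..<k}. nb E v \<inter> A i) \<le> (\<Sum>i\<in>{0..<k}. card (nb E v \<inter> A i))"
          by (rule card_UN_le) simp
        also have "\<dots> \<le> (\<Sum>i\<in>{0..<k}. m - 1)"
        proof (rule sum_mono)
          fix i assume i: "i \<in> {0..<k}"
          have "v \<notin> A (Suc i)"
          proof (cases "Suc i < k")
            case True then show ?thesis using vS unfolding S_def by auto
          next
            case False then have "Suc i = k" using i by auto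
            then show ?thesis using emp unfolding A_def by auto
          qed
          then show "card (nb E v \<inter> A i) \<le> m - 1" using notA vV by blast
        qed
        finally have "card (nb E v) \<le> card (nb E v \<inter> S) + k * (m - 1)" by simp
        moreover have "f0 + k * m \<le> card (nb E v)" using deg vV by blast
        moreover have "k * (m - 1) \<le> k * m" by simp
        ultimately show "f0 \<le> card (nb E v \<inter> S)" by linarith
      qed
      moreover have "S \<subseteq> V" unfolding S_def by blast
      ultimately have "S \<inter> C \<noteq> {}" using noS Sne by blast
      moreover have "C = A 0" unfolding A_def by simp
      ultimately show False unfolding S_def using k by auto
    qed
    then show ?case unfolding S_def by auto
  next
    case (Suc t)
    have IH: "V \<subseteq> (\<Union>i\<in>{t..<k}. A i)" using Suc by simp
    show ?case
    proof
      fix v assume vV: "v \<in> V"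
      show "v \<in> (\<Union>i\<in>{Suc t..<k}. A i)"
      proof (rule ccontr)
        assume nv: "v \<notin> (\<Union>i\<in>{Suc t..<k}. A i)"
        have "nb E v \<subseteq> (\<Union>i\<in>{t..<k}. nb E v \<inter> A i)" using nbV IH by blast
        then have "card (nb E v) \<le> card (\<Union>i\<in>{t..<k}. nb E v \<inter> A i)"
          using finnb[of v] by (intro card_mono) auto
        also have "\<dots> \<le> (\<Sum>i\<in>{t..<k}. card (nb E v \<inter> A i))"
          by (rule card_UN_le) simp
        also have "\<dots> \<le> (\<Sum>i\<in>{t..<k}. m - 1)"
        proof (rule sum_mono)
          fix i assume i: "i \<in> {t..<k}"
          have "v \<notin> A (Suc i)"
          proof (cases "Suc i < k")
            case True then show ?thesis using nv i by auto
          next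
            case False then have "Suc i = k" using i by auto
            then show ?thesis using emp unfolding A_def by auto
          qed
          then show "card (nb E v \<inter> A i) \<le> m - 1" using notA vV by blast
        qed
        finally have "card (nb E v) \<le> (k - t) * (m - 1)" by simp
        moreover have "(k - t) * (m - 1) \<le> k * m" by (intro mult_le_mono) auto
        moreover have "f0 + k * m \<le> card (nb E v)" using deg vV by blast
        ultimately show False using f0 by linarith
      qed
    qed
  qed
  from main[of k] ne show False by auto
qed



lemma geom_bound:
  fixes l :: nat assumes "l \<ge> 2" shows "(\<Sum>i\<le>k. l ^ i) < 2 * l ^ k"
proof (induction k)
  case 0 then show ?case by simp
next
  case (Suc k)
  have "2 * l ^ k \<le> l * l ^ k" using assms by simp
  moreover have "(\<Sum>i\<le>Suc k. l ^ i) = (\<Sum>i\<le>k. l ^ i) + l * l ^ k" by simp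
  moreover have "2 * l ^ Suc k = 2 * (l * l ^ k)" by simp
  ultimately show ?case using Suc by linarith
qed

lemma card_W: "card {xs. set xs \<subseteq> {0..<(l::nat)} \<and> length xs \<le> j} = (\<Sum>i\<le>j. l ^ i)"
  by (simp add: card_lists_length_le)

lemma tree:
  fixes V :: "'a set" and l m k :: nat
  assumes fin: "finite V" and EV: "E \<subseteq> V \<times> V" and CV: "C \<subseteq> V"
    and r: "r \<in> lev m V E C k"
    and Wm: "card {xs. set xs \<subseteq> {0..<l} \<and> length xs \<le> k} < m"
  shows "j \<le> k \<Longrightarrow> \<exists>\<psi>. inj_on \<psi> {xs. set xs \<subseteq> {0..<l} \<and> length xs \<le> j}
      \<and> \<psi> ` {xs. set xs \<subseteq> {0..<l} \<and> length xs \<le> j} \<subseteq> V \<and> \<psi> [] = r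
      \<and> (\<forall>xs i. set xs \<subseteq> {0..<l} \<and> length xs < j \<and> i < l \<longrightarrow> (\<psi> xs, \<psi> (xs @ [i])) \<in> E)
      \<and> (\<forall>xs. set xs \<subseteq> {0..<l} \<and> length xs = j \<longrightarrow> \<psi> xs \<in> lev m V E C (k - j))"
proof (induction j)
  case 0
  have "r \<in> V" using r lev_sub[OF CV] by blast
  then show ?case
    using r by (intro exI[of _ "\<lambda>_. r"]) (auto simp: inj_on_def)
next
  case (Suc j)
  define A where "A = lev m V E C"
  define W where "W = {xs. set xs \<subseteq> {0..<l} \<and> length xs \<le> j}"
  define W' where "W' = {xs. set xs \<subseteq> {0..<l} \<and> length xs \<le> Suc j}"
  define Lv where "Lv = {xs. set xs \<subseteq> {0..<l} \<and> length xs = j}"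
  from Suc obtain \<psi> where inj: "inj_on \<psi> W" and img: "\<psi> ` W \<subseteq> V" and root: "\<psi> [] = r"
    and edg: "\<forall>xs i. set xs \<subseteq> {0..<l} \<and> length xs < j \<and> i < l \<longrightarrow> (\<psi> xs, \<psi> (xs @ [i])) \<in> E"
    and lf: "\<forall>xs. set xs \<subseteq> {0..<l} \<and> length xs = j \<longrightarrow> \<psi> xs \<in> A (k - j)"
    unfolding W_def A_def by auto
  have kj: "k - j = Suc (k - Suc j)" using Suc by simp
  have nbV: "nb E v \<subseteq> V" for v using EV unfolding nb_def by auto
  have finnb: "finite (nb E v)" for v using nbV fin finite_subset by blast
  have finW: "finite W" unfolding W_def by (rule finite_lists_length_le) simp
  have cardL: "card (Lv \<times> {0..<l}) = l ^ j * l"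
    unfolding Lv_def by (simp add: card_cartesian_product card_lists_length_eq)
  have finL: "finite (Lv \<times> {0..<l})" unfolding Lv_def
    by (intro finite_cartesian_product finite_lists_length_eq) simp_all
  have "card W + l ^ j * l = card W'" unfolding W_def W'_def card_W by simp
  also have "card W' \<le> card {xs. set xs \<subseteq> {0..<l} \<and> length xs \<le> k}"
    unfolding W'_def card_W using Suc.prems
    by (intro sum_mono2) auto
  finally have sz: "card (\<psi> ` W) + card (Lv \<times> {0..<l}) * 1 < m"
    using Wm cardL card_image_le[OF finW, of \<psi>] by linarith
  have "\<exists>g. \<forall>x\<in>Lv \<times> {0..<l}. g x \<in> (\<lambda>(xs, i). nb E (\<psi> xs) \<inter> A (k - Suc j)) x
      \<and> (\<lambda>x c. {c}) x (g x) \<inter> \<psi> ` W = {}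
      \<and> (\<forall>y\<in>Lv \<times> {0..<l}. y \<noteq> x \<longrightarrow> (\<lambda>x c. {c}) x (g x) \<inter> (\<lambda>x c. {c}) y (g y) = {})"
  proof (rule greedy[where s = 1])
    show "finite (Lv \<times> {0..<l})" by (rule finL)
    show "finite (\<psi> ` W)" using finW by simp
    show "\<forall>x\<in>Lv \<times> {0..<l}. finite ((\<lambda>(xs, i). nb E (\<psi> xs) \<inter> A (k - Suc j)) x) \<and>
        card (\<psi> ` W) + card (Lv \<times> {0..<l}) * 1 < card ((\<lambda>(xs, i). nb E (\<psi> xs) \<inter> A (k - Suc j)) x)"
    proof
      fix x assume x: "x \<in> Lv \<times> {0..<l}"
      obtain xs i where xi: "x = (xs, i)" by fastforce
      have "\<psi> xs \<in> A (Suc (k - Suc j))" using lf x xi kj unfolding Lv_def by auto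
      then have "m \<le> card (nb E (\<psi> xs) \<inter> A (k - Suc j))" unfolding A_def by simp
      then show "finite ((\<lambda>(xs, i). nb E (\<psi> xs) \<inter> A (k - Suc j)) x) \<and>
        card (\<psi> ` W) + card (Lv \<times> {0..<l}) * 1 < card ((\<lambda>(xs, i). nb E (\<psi> xs) \<inter> A (k - Suc j)) x)"
        using sz finnb xi by auto
    qed
  qed auto
  then obtain g where g0: "\<forall>x\<in>Lv \<times> {0..<l}. g x \<in> (\<lambda>(xs, i). nb E (\<psi> xs) \<inter> A (k - Suc j)) x
      \<and> (\<lambda>x c. {c}) x (g x) \<inter> \<psi> ` W = {}
      \<and> (\<forall>y\<in>Lv \<times> {0..<l}. y \<noteq> x \<longrightarrow> (\<lambda>x c. {c}) x (g x) \<inter> (\<lambda>x c. {c}) y (g y) = {})" by blast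
  have g: "\<forall>x\<in>Lv \<times> {0..<l}. g x \<in> nb E (\<psi> (fst x)) \<inter> A (k - Suc j)
      \<and> g x \<notin> \<psi> ` W \<and> (\<forall>y\<in>Lv \<times> {0..<l}. y \<noteq> x \<longrightarrow> g x \<noteq> g y)"
  proof
    fix x assume x: "x \<in> Lv \<times> {0..<l}"
    have "g x \<in> (\<lambda>(xs, i). nb E (\<psi> xs) \<inter> A (k - Suc j)) x" using g0 x by blast
    moreover have "{g x} \<inter> \<psi> ` W = {}" using g0 x by blast
    moreover have "\<forall>y\<in>Lv \<times> {0..<l}. y \<noteq> x \<longrightarrow> {g x} \<inter> {g y} = {}" using g0 x by blast
    then have "\<forall>y\<in>Lv \<times> {0..<l}. y \<noteq> x \<longrightarrow> g x \<noteq> g y" by blast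
    ultimately show "g x \<in> nb E (\<psi> (fst x)) \<inter> A (k - Suc j)
      \<and> g x \<notin> \<psi> ` W \<and> (\<forall>y\<in>Lv \<times> {0..<l}. y \<noteq> x \<longrightarrow> g x \<noteq> g y)"
      by (simp add: case_prod_beta)
  qed
  have gN: "g x \<in> nb E (\<psi> (fst x))" and gA: "g x \<in> A (k - Suc j)" and gW: "g x \<notin> \<psi> ` W"
    if "x \<in> Lv \<times> {0..<l}" for x using g that by blast+
  have gD: "g x \<noteq> g y" if "x \<in> Lv \<times> {0..<l}" "y \<in> Lv \<times> {0..<l}" "y \<noteq> x" for x y
    using g that by blast
  define \<psi>' where "\<psi>' xs = (if length xs \<le> j then \<psi> xs else g (butlast xs, last xs))" for xs
  have long: "(butlast xs, last xs) \<in> Lv \<times> {0..<l}" if "xs \<in> W'" "\<not> length xs \<le> j" for xs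
  proof -
    have ne: "xs \<noteq> []" using that by auto
    have "set xs \<subseteq> {0..<l}" "length xs = Suc j" using that unfolding W'_def by auto
    moreover have "set (butlast xs) \<subseteq> set xs" by (rule in_set_butlastD[THEN subsetI]) 
    moreover have "last xs \<in> set xs" using ne by simp
    ultimately show ?thesis unfolding Lv_def by auto
  qed
  have short: "xs \<in> W" if "xs \<in> W'" "length xs \<le> j" for xs using that unfolding W_def W'_def by auto
  show ?case
  proof (intro exI[of _ \<psi>'] conjI allI impI)
    show "inj_on \<psi>' {xs. set xs \<subseteq> {0..<l} \<and> length xs \<le> Suc j}"
    proof (rule inj_onI)
      fix xs ys assume xs: "xs \<in> {xs. set xs \<subseteq> {0..<l} \<and> length xs \<le> Suc j}"
        and ys: "ys \<in> {xs. set xs \<subseteq> {0..<l} \<and> length xs \<le> Suc j}" and eq: "\<psi>' xs = \<psi>' ys"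
      have xs': "xs \<in> W'" and ys': "ys \<in> W'" using xs ys unfolding W'_def by auto
      have gi: "g (butlast zs, last zs) \<notin> \<psi> ` W" if "zs \<in> W'" "\<not> length zs \<le> j" for zs
        using gW long[OF that] by blast
      show "xs = ys"
      proof (cases "length xs \<le> j"; cases "length ys \<le> j")
        assume a: "length xs \<le> j" and b: "length ys \<le> j"
        then have "\<psi> xs = \<psi> ys" using eq unfolding \<psi>'_def by simp
        then show ?thesis using inj short[OF xs' a] short[OF ys' b] by (meson inj_onD)
      next
        assume a: "length xs \<le> j" and b: "\<not> length ys \<le> j"
        then have "\<psi> xs = g (butlast ys, last ys)" using eq unfolding \<psi>'_def by simp
        then have False using gi[OF ys' b] short[OF xs' a] by (metis imageI)
        then show ?thesis ..
      next
        assume a: "\<not> length xs \<le> j" and b: "length ys \<le> j"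
        then have "\<psi> ys = g (butlast xs, last xs)" using eq unfolding \<psi>'_def by simp
        then have False using gi[OF xs' a] short[OF ys' b] by (metis imageI)
        then show ?thesis ..
      next
        assume a: "\<not> length xs \<le> j" and b: "\<not> length ys \<le> j"
        then have geq: "g (butlast xs, last xs) = g (butlast ys, last ys)" using eq unfolding \<psi>'_def by simp
        have "(butlast xs, last xs) = (butlast ys, last ys)"
        proof (rule ccontr)
          assume "(butlast xs, last xs) \<noteq> (butlast ys, last ys)"
          then show False using gD[OF long[OF ys' b] long[OF xs' a]] geq by simp
        qed
        moreover have "xs \<noteq> []" "ys \<noteq> []" using a b by auto
        ultimately show ?thesis by (metis append_butlast_last_id prod.inject)
      qed
    qed
    show "\<psi>' ` {xs. set xs \<subseteq> {0..<l} \<and> length xs \<le> Suc j} \<subseteq> V"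
    proof
      fix v assume "v \<in> \<psi>' ` {xs. set xs \<subseteq> {0..<l} \<and> length xs \<le> Suc j}"
      then obtain xs where xs: "xs \<in> W'" and v: "v = \<psi>' xs" unfolding W'_def by auto
      show "v \<in> V"
      proof (cases "length xs \<le> j")
        case True then show ?thesis using v img short[OF xs] unfolding \<psi>'_def by auto
      next
        case False
        then have "g (butlast xs, last xs) \<in> nb E (\<psi> (butlast xs))" using gN[OF long[OF xs False]] by simp
        then show ?thesis using v False nbV unfolding \<psi>'_def by auto
      qed
    qed
    show "\<psi>' [] = r" using root unfolding \<psi>'_def by simp
    fix xs
    show "set xs \<subseteq> {0..<l} \<and> length xs = Suc j \<Longrightarrow> \<psi>' xs \<in> lev m V E C (k - Suc j)"
    proof -
      assume a: "set xs \<subseteq> {0..<l} \<and> length xs = Suc j"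
      then have "xs \<in> W'" "\<not> length xs \<le> j" unfolding W'_def by auto
      then have "g (butlast xs, last xs) \<in> A (k - Suc j)" using gA long by blast
      then show ?thesis using a unfolding \<psi>'_def A_def by simp
    qed
    fix i
    assume a: "set xs \<subseteq> {0..<l} \<and> length xs < Suc j \<and> i < l"
    show "(\<psi>' xs, \<psi>' (xs @ [i])) \<in> E"
    proof (cases "length xs < j")
      case True
      then show ?thesis using edg a unfolding \<psi>'_def by auto
    next
      case False
      then have lj: "length xs = j" using a by auto
      then have "(xs, i) \<in> Lv \<times> {0..<l}" using a unfolding Lv_def by auto
      then have "g (xs, i) \<in> nb E (\<psi> xs)" using gN by fastforce
      then show ?thesis using lj unfolding \<psi>'_def nb_def by auto
    qed
  qed
qed



definition centres :: "nat \<Rightarrow> nat \<Rightarrow> 'a set \<Rightarrow> ('a \<times> 'a) set \<Rightarrow> 'a set" where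
  "centres k h V E = {c. \<exists>\<sigma>. inj_on \<sigma> (in_star_V k h) \<and> \<sigma> ` in_star_V k h \<subseteq> V
     \<and> (\<forall>(a, b) \<in> in_star_E k h. (\<sigma> a, \<sigma> b) \<in> E) \<and> \<sigma> (Inl ()) = c}"

theorem theorem3p3:
  fixes f :: "nat \<Rightarrow> nat \<Rightarrow> int" and k l :: nat
    and V :: "nat set" and E :: "(nat \<times> nat) set"
  assumes hf: "\<And>k h (V' :: nat set) (E' :: (nat \<times> nat) set).
                 k \<ge> 1 \<Longrightarrow> h \<ge> 1 \<Longrightarrow> is_digraph V' E' \<Longrightarrow>
                 int (min_out_degree V' E') \<ge> f k h \<Longrightarrow>
                 contains_subgraph V' E' (in_star_V k h) (in_star_E k h)"
    and hk: "k \<ge> 1" and hl: "l \<ge> 2"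
    and G: "is_digraph V E"
    and deg: "int (min_out_degree V E) \<ge> f k (3 * k * l ^ (k + 1)) + int (2 * k * l ^ k)"
  shows "contains_subgraph V E (T_V k l) (T_E k l)"
proof -
  define H where "H = 3 * k * l ^ (k + 1)"
  define m where "m = 2 * l ^ k"
  define C where "C = centres k H V E"
  have H1: "H \<ge> 1" unfolding H_def using hk hl by simp
  have finV: "finite V" and neV: "V \<noteq> {}" and EV: "E \<subseteq> V \<times> V" and loop: "\<forall>v. (v, v) \<notin> E"
    using G unfolding is_digraph_def by auto
  have Inl_in: "Inl () \<in> in_star_V k H" unfolding in_star_V_def by simp
  have CV: "C \<subseteq> V"
  proof
    fix c assume "c \<in> C"
    then obtain \<sigma> where "\<sigma> ` in_star_V k H \<subseteq> V" "\<sigma> (Inl ()) = c" unfolding C_def centres_def by blast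
    then show "c \<in> V" using Inl_in by blast
  qed
  have nbV: "nb E v \<subseteq> V" for v using EV unfolding nb_def by auto
  have fpos: "f k H \<ge> 1"
  proof (rule ccontr)
    assume "\<not> f k H \<ge> 1"
    then have fle: "f k H \<le> int (min_out_degree {0::nat} {})"
      unfolding min_out_degree_def out_degree_def by simp
    have "is_digraph {0::nat} {}" unfolding is_digraph_def by simp
    have "contains_subgraph {0::nat} {} (in_star_V k H) (in_star_E k H)" by (rule hf[OF hk H1 \<open>is_digraph {0::nat} {}\<close> fle])
    then obtain \<phi> where "inj_on \<phi> (in_star_V k H) \<and> \<phi> ` in_star_V k H \<subseteq> {0} \<and> (\<forall>(a, b)\<in>in_star_E k H. (\<phi> a, \<phi> b) \<in> ({} :: (nat \<times> nat) set))"
      unfolding contains_subgraph_def by (rule exE)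
    then have inj: "inj_on \<phi> (in_star_V k H)" and img0: "\<phi> ` in_star_V k H \<subseteq> {0} \<and> (\<forall>(a, b)\<in>in_star_E k H. (\<phi> a, \<phi> b) \<in> ({} :: (nat \<times> nat) set))"
      by (rule conjunct1, rule conjunct2)
    from img0 have img: "\<phi> ` in_star_V k H \<subseteq> {0}" by (rule conjunct1)
    have a: "Inl () \<in> in_star_V k H" and b: "Inr (0, 0) \<in> in_star_V k H"
      unfolding in_star_V_def using hk H1 by auto
    then have "\<phi> (Inl ()) = 0" "\<phi> (Inr (0, 0)) = 0" using img by blast+
    then have "\<phi> (Inl ()) = \<phi> (Inr (0, 0))" by simp
    then show False using inj_onD[OF inj _ a b] by simp
  qed
  define f0 where "f0 = nat (f k H)"
  have f0: "f0 \<ge> 1" "int f0 = f k H" unfolding f0_def using fpos by auto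
  have degv: "\<forall>v\<in>V. f0 + k * m \<le> card (nb E v)"
  proof
    fix v assume v: "v \<in> V"
    have "min_out_degree V E \<le> out_degree E v"
      unfolding min_out_degree_def using finV v by (intro Min_le) auto
    then have "int (min_out_degree V E) \<le> int (card (nb E v))" unfolding out_degree_def nb_def by simp
    moreover have "k * m = 2 * k * l ^ k" unfolding m_def by simp
    ultimately show "f0 + k * m \<le> card (nb E v)" using deg f0 unfolding H_def by linarith
  qed
  have noS: "\<forall>S. S \<subseteq> V \<longrightarrow> S \<noteq> {} \<longrightarrow> (\<forall>v\<in>S. f0 \<le> card (nb E v \<inter> S)) \<longrightarrow> S \<inter> C \<noteq> {}"
  proof (intro allI impI)
    fix S assume SV: "S \<subseteq> V" and Sne: "S \<noteq> {}" and dS: "\<forall>v\<in>S. f0 \<le> card (nb E v \<inter> S)"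
    define E' where "E' = E \<inter> (S \<times> S)"
    have finS: "finite S" using SV finV finite_subset by blast
    have dg: "is_digraph S E'" unfolding is_digraph_def E'_def using finS Sne loop by auto
    have od: "out_degree E' v = card (nb E v \<inter> S)" if "v \<in> S" for v
    proof -
      have "{w. (v, w) \<in> E'} = nb E v \<inter> S" unfolding E'_def nb_def using that by auto
      then show ?thesis unfolding out_degree_def by simp
    qed
    have "f0 \<le> min_out_degree S E'" unfolding min_out_degree_def
      using finS Sne dS od by (subst Min_ge_iff) auto
    then have "int (min_out_degree S E') \<ge> f k H" using f0 by linarith
    from hf[OF hk H1 dg this] obtain \<sigma> where inj: "inj_on \<sigma> (in_star_V k H)"
      and img: "\<sigma> ` in_star_V k H \<subseteq> S" and ed: "\<forall>(a, b) \<in> in_star_E k H. (\<sigma> a, \<sigma> b) \<in> E'"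
      unfolding contains_subgraph_def by blast
    have "Inl () \<in> in_star_V k H" unfolding in_star_V_def by simp
    then have cS: "\<sigma> (Inl ()) \<in> S" using img by blast
    have "\<sigma> (Inl ()) \<in> C" unfolding C_def centres_def
      using inj img SV ed unfolding E'_def by (intro CollectI exI[of _ \<sigma>]) auto
    then show "S \<inter> C \<noteq> {}" using cS by blast
  qed
  have m1: "m \<ge> 1" unfolding m_def using hl by simp
  have "lev m V E C k \<noteq> {}"
    by (rule lev_nonempty[OF finV neV EV CV hk f0(1) degv noS])
  then obtain r where r: "r \<in> lev m V E C k" by blast
  define W where "W = {xs. set xs \<subseteq> {0..<l} \<and> length xs \<le> k}"
  define Lv where "Lv = {xs. set xs \<subseteq> {0..<l} \<and> length xs = k}"
  have cW: "card W < m" unfolding W_def m_def card_W using geom_bound[OF hl] .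
  obtain \<psi> where inj: "inj_on \<psi> W" and img: "\<psi> ` W \<subseteq> V" 
    and edg: "\<forall>xs i. set xs \<subseteq> {0..<l} \<and> length xs < k \<and> i < l \<longrightarrow> (\<psi> xs, \<psi> (xs @ [i])) \<in> E"
    and lf: "\<forall>xs. set xs \<subseteq> {0..<l} \<and> length xs = k \<longrightarrow> \<psi> xs \<in> lev m V E C (k - k)"
    using tree[OF finV EV CV r cW[unfolded W_def], of k] unfolding W_def by auto
  have lfC: "\<psi> xs \<in> C" if "xs \<in> Lv" for xs using lf that unfolding Lv_def by simp
  have "\<forall>c\<in>C. \<exists>\<sigma>. inj_on \<sigma> (in_star_V k H) \<and> \<sigma> ` in_star_V k H \<subseteq> V
     \<and> (\<forall>(a, b) \<in> in_star_E k H. (\<sigma> a, \<sigma> b) \<in> E) \<and> \<sigma> (Inl ()) = c"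
    unfolding C_def centres_def by blast
  then obtain \<Sigma> where \<Sigma>: "\<forall>c\<in>C. inj_on (\<Sigma> c) (in_star_V k H) \<and> \<Sigma> c ` in_star_V k H \<subseteq> V
     \<and> (\<forall>(a, b) \<in> in_star_E k H. (\<Sigma> c a, \<Sigma> c b) \<in> E) \<and> \<Sigma> c (Inl ()) = c"
    by (rule bchoice[elim_format]) blast
  define P where "P = (\<lambda>(x :: nat list \<times> nat) p. (\<lambda>j. \<Sigma> (\<psi> (fst x)) (Inr (p, j))) ` {0..<k})"
  have finL: "finite (Lv \<times> {0..<l})" unfolding Lv_def
    by (intro finite_cartesian_product finite_lists_length_eq) simp_all
  have cardL: "card (Lv \<times> {0..<l}) = l ^ k * l"
    unfolding Lv_def by (simp add: card_cartesian_product card_lists_length_eq)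
  have finW: "finite W" unfolding W_def by (rule finite_lists_length_le) simp
  have sz: "card (\<psi> ` W) + card (Lv \<times> {0..<l}) * k < H"
  proof -
    have "card (\<psi> ` W) < 2 * l ^ k" using card_image_le[OF finW, of \<psi>] cW unfolding m_def by linarith
    moreover have "2 * l ^ k \<le> l ^ k * l" using hl by simp
    moreover have "l ^ k * l \<le> k * (l ^ k * l)" using hk by simp
    moreover have "H = 3 * (k * (l ^ k * l))" unfolding H_def by (simp add: algebra_simps)
    moreover have "card (Lv \<times> {0..<l}) * k = k * (l ^ k * l)" using cardL by simp
    ultimately show ?thesis by linarith
  qed
  have "\<exists>g. \<forall>x\<in>Lv \<times> {0..<l}. g x \<in> (\<lambda>_. {0..<H}) x \<and> P x (g x) \<inter> \<psi> ` W = {} \<and>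
              (\<forall>y\<in>Lv \<times> {0..<l}. y \<noteq> x \<longrightarrow> P x (g x) \<inter> P y (g y) = {})"
  proof (rule greedy[where s = k])
    show "finite (Lv \<times> {0..<l})" by (rule finL)
    show "finite (\<psi> ` W)" using finW by simp
    show "\<forall>x\<in>Lv \<times> {0..<l}. finite ((\<lambda>_. {0..<H}) x) \<and> card (\<psi> ` W) + card (Lv \<times> {0..<l}) * k < card ((\<lambda>_. {0..<H}) x)"
      using sz by simp
    show "\<forall>x\<in>Lv \<times> {0..<l}. \<forall>c\<in>(\<lambda>_. {0..<H}) x. finite (P x c) \<and> card (P x c) \<le> k"
      unfolding P_def using card_image_le[of "{0..<k}"] by auto
    show "\<forall>x\<in>Lv \<times> {0..<l}. \<forall>p1\<in>(\<lambda>_. {0..<H}) x. \<forall>p2\<in>(\<lambda>_. {0..<H}) x. p1 \<noteq> p2 \<longrightarrow> P x p1 \<inter> P x p2 = {}"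
    proof (intro ballI impI)
      fix x p1 p2 assume x: "x \<in> Lv \<times> {0..<l}" and p1: "p1 \<in> {0..<H}" and p2: "p2 \<in> {0..<H}" and ne: "p1 \<noteq> p2"
      have c: "\<psi> (fst x) \<in> C" using lfC x by auto
      then have injs: "inj_on (\<Sigma> (\<psi> (fst x))) (in_star_V k H)" using \<Sigma> by blast
      show "P x p1 \<inter> P x p2 = {}"
      proof (rule ccontr)
        assume "P x p1 \<inter> P x p2 \<noteq> {}"
        then obtain j1 j2 where j: "j1 < k" "j2 < k"
          and eq: "\<Sigma> (\<psi> (fst x)) (Inr (p1, j1)) = \<Sigma> (\<psi> (fst x)) (Inr (p2, j2))"
          unfolding P_def by auto
        have "Inr (p1, j1) \<in> in_star_V k H" "Inr (p2, j2) \<in> in_star_V k H"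
          unfolding in_star_V_def using j p1 p2 by auto
        then have "(Inr (p1, j1) :: unit + nat \<times> nat) = Inr (p2, j2)" using inj_onD[OF injs eq] by blast
        then show False using ne by simp
      qed
    qed
  qed
  then obtain g where g0: "\<forall>x\<in>Lv \<times> {0..<l}. g x \<in> (\<lambda>_. {0..<H}) x \<and> P x (g x) \<inter> \<psi> ` W = {} \<and>
              (\<forall>y\<in>Lv \<times> {0..<l}. y \<noteq> x \<longrightarrow> P x (g x) \<inter> P y (g y) = {})" by blast
  have gH: "g x < H" and gW: "P x (g x) \<inter> \<psi> ` W = {}" if "x \<in> Lv \<times> {0..<l}" for x
    using g0 that by auto
  have gD: "P x (g x) \<inter> P y (g y) = {}" if "x \<in> Lv \<times> {0..<l}" "y \<in> Lv \<times> {0..<l}" "y \<noteq> x" for x y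
    using g0 that by blast
  define \<phi> where "\<phi> = case_sum \<psi> (\<lambda>(xs, i, j). \<Sigma> (\<psi> xs) (Inr (g (xs, i), j)))"
  have \<phi>l: "\<phi> (Inl xs) = \<psi> xs" for xs unfolding \<phi>_def by simp
  have \<phi>r: "\<phi> (Inr (xs, i, j)) = \<Sigma> (\<psi> xs) (Inr (g (xs, i), j))" for xs i j unfolding \<phi>_def by simp
  have \<phi>rP: "\<phi> (Inr (xs, i, j)) \<in> P (xs, i) (g (xs, i))" if "j < k" for xs i j
    unfolding \<phi>r P_def using that by auto
  have SigC: "inj_on (\<Sigma> (\<psi> xs)) (in_star_V k H) \<and> \<Sigma> (\<psi> xs) ` in_star_V k H \<subseteq> V
     \<and> (\<forall>(a, b) \<in> in_star_E k H. (\<Sigma> (\<psi> xs) a, \<Sigma> (\<psi> xs) b) \<in> E) \<and> \<Sigma> (\<psi> xs) (Inl ()) = \<psi> xs"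
    if "xs \<in> Lv" for xs using \<Sigma> lfC[OF that] by blast
  have TV: "T_V k l = Inl ` W \<union> (\<lambda>(xs, i, j). Inr (xs, i, j)) ` {(xs, i, j). xs \<in> Lv \<and> i < l \<and> j < k}"
    unfolding T_V_def W_def Lv_def by auto
  show ?thesis unfolding contains_subgraph_def
  proof (intro exI[of _ \<phi>] conjI)
    show "inj_on \<phi> (T_V k l)"
    proof (rule inj_onI)
      fix a b assume a: "a \<in> T_V k l" and b: "b \<in> T_V k l" and eq: "\<phi> a = \<phi> b"
      show "a = b"
      proof (cases a; cases b)
        fix xs ys assume ax: "a = Inl xs" and bx: "b = Inl ys"
        have "xs \<in> W" "ys \<in> W" using a b ax bx unfolding TV by auto
        then show ?thesis using eq ax bx \<phi>l inj by (metis inj_onD)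
      next
        fix xs z assume ax: "a = Inl xs" and bx: "b = Inr z"
        obtain ys i j where z: "z = (ys, i, j)" by (cases z) auto
        have r: "xs \<in> W" "ys \<in> Lv" "i < l" "j < k" using a b ax bx z unfolding TV by auto
        have mem: "(ys, i) \<in> Lv \<times> {0..<l}" using r by simp
        have "\<phi> b \<in> P (ys, i) (g (ys, i))" using \<phi>rP[OF r(4)] bx z by simp
        moreover have "\<phi> b \<in> \<psi> ` W" using eq[symmetric] ax \<phi>l r(1) by simp
        ultimately show ?thesis using gW[OF mem] by blast
      next
        fix z xs assume ax: "a = Inr z" and bx: "b = Inl xs"
        obtain ys i j where z: "z = (ys, i, j)" by (cases z) auto
        have r: "xs \<in> W" "ys \<in> Lv" "i < l" "j < k" using a b ax bx z unfolding TV by auto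
        have mem: "(ys, i) \<in> Lv \<times> {0..<l}" using r by simp
        have "\<phi> a \<in> P (ys, i) (g (ys, i))" using \<phi>rP[OF r(4)] ax z by simp
        moreover have "\<phi> a \<in> \<psi> ` W" using eq bx \<phi>l r(1) by simp
        ultimately show ?thesis using gW[OF mem] by blast
      next
        fix z1 z2 assume ax: "a = Inr z1" and bx: "b = Inr z2"
        obtain xs i j where z1: "z1 = (xs, i, j)" by (cases z1) auto
        obtain ys i' j' where z2: "z2 = (ys, i', j')" by (cases z2) auto
        have r1: "xs \<in> Lv" "i < l" "j < k" "ys \<in> Lv" "i' < l" "j' < k" using a b ax bx z1 z2 unfolding TV by auto
        show ?thesis
        proof (cases "(xs, i) = (ys, i')")
          case True
          then have xy: "xs = ys" "i = i'" by auto
          have "\<Sigma> (\<psi> xs) (Inr (g (xs, i), j)) = \<Sigma> (\<psi> xs) (Inr (g (xs, i), j'))"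
            using eq ax bx z1 z2 xy \<phi>r by simp
          moreover have "(xs, i) \<in> Lv \<times> {0..<l}" using r1 by auto
          moreover have "Inr (g (xs, i), j) \<in> in_star_V k H" "Inr (g (xs, i), j') \<in> in_star_V k H"
            using gH r1 calculation(2) unfolding in_star_V_def by auto
          ultimately have "(Inr (g (xs, i), j) :: unit + nat \<times> nat) = Inr (g (xs, i), j')"
            using SigC[OF r1(1)] inj_onD by metis
          then show ?thesis using ax bx z1 z2 xy by simp
        next
          case False
          have m1: "(xs, i) \<in> Lv \<times> {0..<l}" "(ys, i') \<in> Lv \<times> {0..<l}" using r1 by auto
          have "\<phi> a \<in> P (xs, i) (g (xs, i))" "\<phi> b \<in> P (ys, i') (g (ys, i'))"
            using ax bx z1 z2 \<phi>rP r1 by auto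
          then show ?thesis using gD[OF m1(2) m1(1)] False eq by auto
        qed
      qed
    qed
    show "\<phi> ` T_V k l \<subseteq> V"
    proof
      fix v assume "v \<in> \<phi> ` T_V k l"
      then obtain a where a: "a \<in> T_V k l" and v: "v = \<phi> a" by blast
      show "v \<in> V"
      proof (cases a)
        case (Inl xs)
        then have "xs \<in> W" using a unfolding TV by auto
        then show ?thesis using v Inl \<phi>l img by auto
      next
        case (Inr z)
        obtain xs i j where z: "z = (xs, i, j)" by (cases z) auto
        have r1: "xs \<in> Lv" "i < l" "j < k" using a Inr z unfolding TV by auto
        have "g (xs, i) < H" using gH r1 by auto
        then have "Inr (g (xs, i), j) \<in> in_star_V k H" unfolding in_star_V_def using r1 by auto
        then show ?thesis using SigC[OF r1(1)] v Inr z \<phi>r by blast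
      qed
    qed
    show "\<forall>(a, b)\<in>T_E k l. (\<phi> a, \<phi> b) \<in> E"
    proof (intro ballI, clarify)
      fix a b assume ab: "(a, b) \<in> T_E k l"
      then consider
          (t) xs i where "a = Inl xs" "b = Inl (xs @ [i])" "length xs < k" "set xs \<subseteq> {0..<l}" "i < l"
        | (p) xs i j where "a = Inr (xs, i, j)" "b = Inr (xs, i, Suc j)" "xs \<in> Lv" "i < l" "Suc j < k"
        | (c) xs i where "a = Inr (xs, i, k - 1)" "b = Inl xs" "xs \<in> Lv" "i < l"
        unfolding T_E_def Lv_def by blast
      then show "(\<phi> a, \<phi> b) \<in> E"
      proof cases
        case t then show ?thesis using edg \<phi>l by auto
      next
        case p
        have "g (xs, i) < H" using gH p by auto
        then have "(Inr (g (xs, i), j), Inr (g (xs, i), Suc j)) \<in> in_star_E k H"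
          unfolding in_star_E_def using p by auto
        then show ?thesis using SigC[OF p(3)] p \<phi>r by auto
      next
        case c
        have "g (xs, i) < H" using gH c by auto
        then have "(Inr (g (xs, i), k - 1), Inl ()) \<in> in_star_E k H"
          unfolding in_star_E_def using c by auto
        then show ?thesis using SigC[OF c(3)] c \<phi>r \<phi>l by auto
      qed
    qed
  qed
qed

end
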